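(* Let $P$ be a set of $n\geq 5$ points in general position in the plane and let $\mathcal{P}$ be the set of all closed segments with both endpoints in $P$. If $\mathcal{P}$ has a good-2-set, then $\mu(D(P))\geq\binom{n}{2}-8$.
   Context: General position means no three points collinear. Two segments cross if they meet in a single point interior to both; a segment is clean in $\mathcal{P}$ if no other segment of $\mathcal{P}$ crosses it. For disjoint segments $uv,xy\in\mathcal{P}$ let $\mathcal{D}(uv,xy):=\{uv,ux,uy,vx,vy,xy\}$ (a drawing of $K_4$); the two segments of $\{ux,uy,vx,vy\}$ lying in the interior of the convex hull of $\mathcal{D}(uv,xy)$ are its diagonals. $\mathcal{D}(uv,xy)$ is a good-2-set of $\mathcal{P}$ if: $uv$ and $xy$ are clean in $\mathcal{P}$; each of $uv$ and $xy$ has at least one endpoint on the boundary of the convex hull of $P$; and, letting $L$ and $R$ be the two opposite quadrants of the plane determined by the lines spanned by the two diagonals that are internally disjoint from $uv$ and $xy$, the interior of $L$ (resp. $R$) contains a segment $e_l$ (resp. $e_r$) of $\mathcal{P}$ not crossed by any segment of $\mathcal{P}\setminus\mathcal{D}(uv,xy)$. $D(P)$ is the graph with vertex set $\mathcal{P}$, two segments adjacent iff disjoint. For a graph $G$ and $U\subseteq V(G)$, two distinct vertices $x,y\in U$ are $U$-mutually visible if $G$ contains a shortest $x$-$y$ path none of whose internal vertices lies in $U$; $U$ is a mutual-visibility set if every two distinct vertices of $U$ are $U$-mutually visible. $\mu(G)$ is the maximum size of a mutual-visibility set of $G$. *)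

theory Defs
  imports "HOL-Analysis.Analysis"
begin

type_synonym pt = "real \<times> real"

definition gen_pos :: "pt set \<Rightarrow> bool" where
  "gen_pos P \<longleftrightarrow> (\<forall>a\<in>P. \<forall>b\<in>P. \<forall>c\<in>P.
      a \<noteq> b \<and> b \<noteq> c \<and> a \<noteq> c \<longrightarrow> \<not> collinear {a, b, c})"

text \<open>A segment is represented by its set of two endpoints; the closed geometric
  segment is its convex hull, and its relative interior is the hull minus the endpoints.\<close>
definition segs :: "pt set \<Rightarrow> pt set set" where
  "segs P = {{u, v} | u v. u \<in> P \<and> v \<in> P \<and> u \<noteq> v}"

definition seg_interior :: "pt set \<Rightarrow> pt set" where
  "seg_interior s = convex hull s - s"

definition crosses :: "pt set \<Rightarrow> pt set \<Rightarrow> bool" where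
  "crosses s t \<longleftrightarrow> (\<exists>p. convex hull s \<inter> convex hull t = {p} \<and> p \<notin> s \<and> p \<notin> t)"

definition clean :: "pt set set \<Rightarrow> pt set \<Rightarrow> bool" where
  "clean PP s \<longleftrightarrow> \<not> (\<exists>t\<in>PP. t \<noteq> s \<and> crosses t s)"

definition seg_disjoint :: "pt set \<Rightarrow> pt set \<Rightarrow> bool" where
  "seg_disjoint s t \<longleftrightarrow> convex hull s \<inter> convex hull t = {}"

definition Dset :: "pt \<Rightarrow> pt \<Rightarrow> pt \<Rightarrow> pt \<Rightarrow> pt set set" where
  "Dset u v x y = {{u, v}, {u, x}, {u, y}, {v, x}, {v, y}, {x, y}}"

definition is_diag :: "pt \<Rightarrow> pt \<Rightarrow> pt \<Rightarrow> pt \<Rightarrow> pt set \<Rightarrow> bool" where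
  "is_diag u v x y d \<longleftrightarrow> d \<in> {{u, x}, {u, y}, {v, x}, {v, y}} \<and>
     seg_interior d \<subseteq> interior (convex hull {u, v, x, y})"

definition cr :: "pt \<Rightarrow> pt \<Rightarrow> real" where
  "cr p q = fst p * snd q - snd p * fst q"

text \<open>Open quadrant determined by the lines through a,b and through c,e, with sign
  pattern (s1,s2) (i.e. the interior of a quadrant).\<close>
definition quad :: "pt \<Rightarrow> pt \<Rightarrow> pt \<Rightarrow> pt \<Rightarrow> real \<Rightarrow> real \<Rightarrow> pt set" where
  "quad a b c e s1 s2 = {p. 0 < s1 * cr (b - a) (p - a) \<and> 0 < s2 * cr (e - c) (p - c)}"

definition good2set :: "pt set \<Rightarrow> pt \<Rightarrow> pt \<Rightarrow> pt \<Rightarrow> pt \<Rightarrow> bool" where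
  "good2set P u v x y \<longleftrightarrow>
     {u, v} \<in> segs P \<and> {x, y} \<in> segs P \<and> seg_disjoint {u, v} {x, y} \<and>
     clean (segs P) {u, v} \<and> clean (segs P) {x, y} \<and>
     (u \<in> frontier (convex hull P) \<or> v \<in> frontier (convex hull P)) \<and>
     (x \<in> frontier (convex hull P) \<or> y \<in> frontier (convex hull P)) \<and>
     (\<exists>a b c e s1 s2. a \<noteq> b \<and> c \<noteq> e \<and> {a, b} \<noteq> {c, e} \<and>
        is_diag u v x y {a, b} \<and> is_diag u v x y {c, e} \<and>
        s1 \<in> {-1, 1} \<and> s2 \<in> {-1, 1} \<and>
        quad a b c e s1 s2 \<inter> (seg_interior {u, v} \<union> seg_interior {x, y}) = {} \<and>
        quad a b c e (-s1) (-s2) \<inter> (seg_interior {u, v} \<union> seg_interior {x, y}) = {} \<and>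
        (\<exists>el\<in>segs P. convex hull el \<subseteq> quad a b c e s1 s2 \<and>
            (\<forall>t\<in>segs P - Dset u v x y. \<not> crosses t el)) \<and>
        (\<exists>er\<in>segs P. convex hull er \<subseteq> quad a b c e (-s1) (-s2) \<and>
            (\<forall>t\<in>segs P - Dset u v x y. \<not> crosses t er)))"

definition walk :: "'v set \<Rightarrow> ('v \<Rightarrow> 'v \<Rightarrow> bool) \<Rightarrow> 'v list \<Rightarrow> bool" where
  "walk V E xs \<longleftrightarrow> xs \<noteq> [] \<and> set xs \<subseteq> V \<and>
     (\<forall>i. Suc i < length xs \<longrightarrow> E (xs ! i) (xs ! Suc i))"

definition shortest_path :: "'v set \<Rightarrow> ('v \<Rightarrow> 'v \<Rightarrow> bool) \<Rightarrow> 'v \<Rightarrow> 'v \<Rightarrow> 'v list \<Rightarrow> bool" where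
  "shortest_path V E x y xs \<longleftrightarrow> walk V E xs \<and> hd xs = x \<and> last xs = y \<and>
     (\<forall>ys. walk V E ys \<and> hd ys = x \<and> last ys = y \<longrightarrow> length xs \<le> length ys)"

definition mutually_visible :: "'v set \<Rightarrow> ('v \<Rightarrow> 'v \<Rightarrow> bool) \<Rightarrow> 'v set \<Rightarrow> 'v \<Rightarrow> 'v \<Rightarrow> bool" where
  "mutually_visible V E U x y \<longleftrightarrow>
     (\<exists>xs. shortest_path V E x y xs \<and> set (butlast (tl xs)) \<inter> U = {})"

definition mv_set :: "'v set \<Rightarrow> ('v \<Rightarrow> 'v \<Rightarrow> bool) \<Rightarrow> 'v set \<Rightarrow> bool" where
  "mv_set V E U \<longleftrightarrow> U \<subseteq> V \<and> (\<forall>x\<in>U. \<forall>y\<in>U. x \<noteq> y \<longrightarrow> mutually_visible V E U x y)"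

definition mu :: "'v set \<Rightarrow> ('v \<Rightarrow> 'v \<Rightarrow> bool) \<Rightarrow> nat" where
  "mu V E = Max (card ` {U. mv_set V E U})"

end

theory Submission
  imports Defs
begin

lemma cr_aff: "cr d (((1-t) *\<^sub>R p + t *\<^sub>R q) - c) = (1-t) * cr d (p - c) + t * cr d (q - c)"
  by (simp add: cr_def algebra_simps)

lemma cr_inner: "cr (b - a) (p - a) = (- snd (b - a), fst (b - a)) \<bullet> p - (- snd (b - a), fst (b - a)) \<bullet> a"
  by (simp add: cr_def inner_prod_def algebra_simps)

lemma cr_self: "cr (b - a) (b - a) = 0" "cr d (a - a) = 0"
  by (simp_all add: cr_def)

lemma half_in: "(1/2::real) *\<^sub>R (p + q) \<in> convex hull {p, q}"
proof -
  have "(1/2::real) *\<^sub>R (p + q) = (1 - 1/2) *\<^sub>R p + (1/2::real) *\<^sub>R q" by (simp add: algebra_simps)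
  then show ?thesis unfolding segment_convex_hull[symmetric] closed_segment_def
    by (intro CollectI exI[of _ "1/2"]) auto
qed

lemma half_ne: assumes "p \<noteq> (q::pt)" shows "(1/2::real) *\<^sub>R (p + q) \<noteq> p" "(1/2::real) *\<^sub>R (p + q) \<noteq> q"
  using assms by (auto simp: prod_eq_iff)

lemma half_seg_int: assumes "p \<noteq> (q::pt)" shows "(1/2::real) *\<^sub>R (p + q) \<in> seg_interior {p,q}"
  using half_in half_ne[OF assms] unfolding seg_interior_def by auto

lemma cr_half: "cr d ((1/2::real) *\<^sub>R (p + q) - c) = (cr d (p - c) + cr d (q - c)) / 2"
  by (simp add: cr_def algebra_simps)

lemma diag_side:
  assumes "is_diag u v x y {a,b}" "a \<noteq> b" "\<sigma> \<in> {-1, 1::real}"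
  shows "\<exists>p\<in>{u,v,x,y}. \<sigma> * cr (b - a) (p - a) > 0"
proof (rule ccontr)
  assume H: "\<not> ?thesis"
  define w where "w = \<sigma> *\<^sub>R (- snd (b - a), fst (b - a))"
  have crw: "\<sigma> * cr (b - a) (p - a) = w \<bullet> p - w \<bullet> a" for p
    unfolding w_def cr_inner by (simp add: inner_prod_def algebra_simps)
  have w0: "w \<noteq> 0" using assms(2,3) by (auto simp: w_def prod_eq_iff)
  have "{u,v,x,y} \<subseteq> {p. w \<bullet> p \<le> w \<bullet> a}" using H crw by (auto simp: not_less)
  then have "convex hull {u,v,x,y} \<subseteq> {p. w \<bullet> p \<le> w \<bullet> a}"
    by (intro hull_minimal convex_halfspace_le)
  then have "interior (convex hull {u,v,x,y}) \<subseteq> {p. w \<bullet> p < w \<bullet> a}"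
    using interior_mono interior_halfspace_le[OF w0] by blast
  moreover have "(1/2::real) *\<^sub>R (a + b) \<in> interior (convex hull {u,v,x,y})"
    using assms(1) half_seg_int[OF assms(2)] unfolding is_diag_def by blast
  moreover have "\<sigma> * cr (b - a) ((1/2::real) *\<^sub>R (a + b) - a) = 0"
    unfolding cr_half by (simp add: cr_def)
  ultimately show False using crw by fastforce
qed

lemma sep:
  fixes h :: "pt \<Rightarrow> real"
  assumes hdef: "\<And>p. h p = s * cr d (p - c)"
    and "h a0 \<ge> 0" "h l > 0" "h b0 \<le> 0" "h r < 0" "a0 \<noteq> b0"
  shows "convex hull {a0, l} \<inter> convex hull {b0, r} = {}"
proof (rule ccontr)
  assume "\<not> ?thesis"
  then obtain z where z1: "z \<in> closed_segment a0 l" and z2: "z \<in> closed_segment b0 r"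
    by (auto simp: segment_convex_hull)
  obtain t where t: "0 \<le> t" "t \<le> 1" "z = (1-t) *\<^sub>R a0 + t *\<^sub>R l" using z1 by (auto simp: closed_segment_def)
  obtain t' where t': "0 \<le> t'" "t' \<le> 1" "z = (1-t') *\<^sub>R b0 + t' *\<^sub>R r" using z2 by (auto simp: closed_segment_def)
  have aff: "h ((1-\<tau>) *\<^sub>R p + \<tau> *\<^sub>R q) = (1-\<tau>) * h p + \<tau> * h q" for \<tau> p q
    unfolding hdef cr_aff by (simp add: algebra_simps)
  have e1: "h z = (1-t) * h a0 + t * h l" using aff t(3) by simp
  have e2: "h z = (1-t') * h b0 + t' * h r" using aff t'(3) by simp
  have "(1-t) * h a0 \<ge> 0" using t assms by simp
  moreover have "(1-t') * h b0 \<le> 0" using t' assms by (simp add: mult_nonneg_nonpos)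
  moreover have "t > 0 \<Longrightarrow> t * h l > 0" using assms by simp
  moreover have "t' > 0 \<Longrightarrow> t' * h r < 0" using assms by (simp add: mult_pos_neg)
  moreover have "t \<le> 1 \<Longrightarrow> 0 \<le> t * h l" using assms t by simp
  moreover have "0 \<le> t' \<Longrightarrow> t' * h r \<le> 0" using assms by (simp add: mult_nonneg_nonpos)
  ultimately have "t = 0" "t' = 0" using e1 e2 t t' by fastforce+
  then show False using t t' assms by simp
qed

lemma hull2_collinear: "z \<in> convex hull {p, q} \<Longrightarrow> collinear {p, q, z}"
  using convex_hull_subset_affine_hull affine_hull_3_imp_collinear by blast

lemma gp_cross:
  assumes gp: "gen_pos P" and s: "s \<in> segs P" and w: "w \<in> segs P"
    and dj: "s \<inter> w = {}" and m: "\<not> seg_disjoint s w"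
  shows "crosses s w"
proof -
  obtain p q where pq: "s = {p,q}" "p \<in> P" "q \<in> P" "p \<noteq> q" using s by (auto simp: segs_def)
  obtain p' q' where pq': "w = {p',q'}" "p' \<in> P" "q' \<in> P" "p' \<noteq> q'" using w by (auto simp: segs_def)
  have d: "p \<noteq> p'" "p \<noteq> q'" "q \<noteq> p'" "q \<noteq> q'" using dj pq pq' by auto
  obtain z where z: "z \<in> convex hull s" "z \<in> convex hull w" using m by (auto simp: seg_disjoint_def)
  have nc: "\<not> collinear {a, b, c}" if "a \<in> {p,q,p',q'}" "b \<in> {p,q,p',q'}" "c \<in> {p,q,p',q'}"
     "a \<noteq> b" "b \<noteq> c" "a \<noteq> c" for a b c
  proof -
    have "a \<in> P" "b \<in> P" "c \<in> P" using that pq pq' by auto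
    then show ?thesis using gp that(4-6) unfolding gen_pos_def by blast
  qed
  have uniq: "z' = z" if "z' \<in> convex hull s" "z' \<in> convex hull w" for z'
  proof (rule ccontr)
    assume ne: "z' \<noteq> z"
    have c1: "collinear {p,q,z}" "collinear {p,q,z'}" "collinear {p',q',z}" "collinear {p',q',z'}"
      using hull2_collinear z that pq pq' by auto
    have "collinear {p,q,z,z'}" using c1 collinear_4_3[OF pq(4)] by simp
    then have a1: "collinear {z,z',p}" "collinear {z,z',q}"
      by (rule collinear_subset; auto)+
    have "collinear {p',q',z,z'}" using c1 collinear_4_3[OF pq'(4)] by simp
    then have a2: "collinear {z,z',p'}" by (rule collinear_subset) auto
    have "collinear (insert z (insert z' {p,q,p'}))"
      using collinear_triples[OF ne[symmetric], of "{p,q,p'}"] a1 a2 by simp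
    then have "collinear {p,q,p'}" by (rule collinear_subset) auto
    then show False using nc[of p q p'] pq d by auto
  qed
  have zs: "z \<notin> s"
  proof
    assume "z \<in> s"
    then have "z = p \<or> z = q" using pq by auto
    moreover have "collinear {p', q', z}" using hull2_collinear z(2) pq'(1) by blast
    ultimately show False using nc[of p' q' p] nc[of p' q' q] d pq' by auto
  qed
  have zw: "z \<notin> w"
  proof
    assume "z \<in> w"
    then have "z = p' \<or> z = q'" using pq' by auto
    moreover have "collinear {p, q, z}" using hull2_collinear z(1) pq(1) by blast
    ultimately show False using nc[of p q p'] nc[of p q q'] d pq by auto
  qed
  have "convex hull s \<inter> convex hull w = {z}"
  proof (intro equalityI subsetI)
    fix y assume "y \<in> convex hull s \<inter> convex hull w"
    then show "y \<in> {z}" using uniq by blast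
  qed (use z in blast)
  then show ?thesis unfolding crosses_def using zs zw by blast
qed

lemma crosses_sym: "crosses s t \<longleftrightarrow> crosses t s"
  unfolding crosses_def by (auto simp: Int_commute)

lemma seg_disjoint_sym: "seg_disjoint s t \<longleftrightarrow> seg_disjoint t s"
  unfolding seg_disjoint_def by (auto simp: Int_commute)

lemma quad_mid:
  assumes "seg_interior {p,q} \<inter> quad a b c e s1 s2 = {}" "p \<noteq> q"
  shows "\<not> (s1 * cr (b-a) (p-a) + s1 * cr (b-a) (q-a) > 0 \<and> s2 * cr (e-c) (p-c) + s2 * cr (e-c) (q-c) > 0)"
proof
  assume H: "s1 * cr (b-a) (p-a) + s1 * cr (b-a) (q-a) > 0 \<and> s2 * cr (e-c) (p-c) + s2 * cr (e-c) (q-c) > 0"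
  have "(1/2::real) *\<^sub>R (p + q) \<in> quad a b c e s1 s2"
  proof -
    have "s1 * cr (b-a) ((1/2::real) *\<^sub>R (p + q) - a) = (s1 * cr (b-a) (p-a) + s1 * cr (b-a) (q-a)) / 2"
      "s2 * cr (e-c) ((1/2::real) *\<^sub>R (p + q) - c) = (s2 * cr (e-c) (p-c) + s2 * cr (e-c) (q-c)) / 2"
      by (simp_all only: cr_half) (simp_all add: algebra_simps)
    then show ?thesis unfolding quad_def using H by simp
  qed
  then show False using assms half_seg_int[OF assms(2)] by blast
qed

lemma perm4:
  assumes "p \<in> {a,b,l,r}" "q \<in> {a,b,l,r}" "p' \<in> {a,b,l,r}" "q' \<in> {a,b,l,r}"
   "distinct [p,q,p',q']" "distinct [a,b,l,r]" "{p,q} \<noteq> {a,b}" "{p',q'} \<noteq> {a,b}"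
  shows "({p,q} = {a,l} \<and> {p',q'} = {b,r}) \<or> ({p,q} = {a,r} \<and> {p',q'} = {b,l}) \<or>
         ({p',q'} = {a,l} \<and> {p,q} = {b,r}) \<or> ({p',q'} = {a,r} \<and> {p,q} = {b,l})"
  using assms by (simp only: insert_iff empty_iff) (elim disjE; simp add: insert_commute)

lemma comb:
  assumes dist: "distinct [u,v,x,y,l1,l2,r1,r2]"
  and st: "s = {p,q}" "t = {p',q'}"
  and mA: "{u,v} \<inter> (s \<union> t) \<noteq> {}" and mB: "{x,y} \<inter> (s \<union> t) \<noteq> {}"
  and mL: "{l1,l2} \<inter> (s \<union> t) \<noteq> {}" and mR: "{r1,r2} \<inter> (s \<union> t) \<noteq> {}"
  and ns: "s \<notin> {{u,v},{u,x},{u,y},{v,x},{v,y},{x,y}}"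
  and nt: "t \<notin> {{u,v},{u,x},{u,y},{v,x},{v,y},{x,y}}"
  shows "\<exists>a0\<in>{u,v}. \<exists>b0\<in>{x,y}. \<exists>l\<in>{l1,l2}. \<exists>r\<in>{r1,r2}.
     (s = {a0,l} \<and> t = {b0,r}) \<or> (s = {a0,r} \<and> t = {b0,l}) \<or> (t = {a0,l} \<and> s = {b0,r}) \<or> (t = {a0,r} \<and> s = {b0,l})"
proof -
  obtain a0 where a0: "a0 \<in> {u,v}" "a0 \<in> {p,q,p',q'}" using mA st by blast
  obtain b0 where b0: "b0 \<in> {x,y}" "b0 \<in> {p,q,p',q'}" using mB st by blast
  obtain l where l: "l \<in> {l1,l2}" "l \<in> {p,q,p',q'}" using mL st by blast
  obtain r where r: "r \<in> {r1,r2}" "r \<in> {p,q,p',q'}" using mR st by blast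
  have d: "distinct [a0,b0,l,r]"
    using a0(1) b0(1) l(1) r(1) dist by (simp only: insert_iff empty_iff) (elim disjE; simp)
  have sub: "{a0,b0,l,r} \<subseteq> {p,q,p',q'}" using a0 b0 l r by blast
  have c4: "card {a0,b0,l,r} = 4" using d by simp
  have "card {p,q,p',q'} \<le> 4"
    using card_length[of "[p,q,p',q']"] by simp
  then have "card {a0,b0,l,r} = card {p,q,p',q'}" using card_mono[OF _ sub] c4 by simp
  then have eq: "{a0,b0,l,r} = {p,q,p',q'}" using card_subset_eq[OF _ sub] by simp
  have "card (set [p,q,p',q']) = length [p,q,p',q']" using eq c4 by simp
  then have dpq: "distinct [p,q,p',q']" by (rule card_distinct)
  have m: "p \<in> {a0,b0,l,r}" "q \<in> {a0,b0,l,r}" "p' \<in> {a0,b0,l,r}" "q' \<in> {a0,b0,l,r}"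
    using eq by auto
  have au: "a0 = u \<or> a0 = v" using a0(1) by simp
  have bx: "b0 = x \<or> b0 = y" using b0(1) by simp
  have "{p,q} \<noteq> {a0,b0}"
  proof
    assume "{p,q} = {a0,b0}"
    then have "s = {a0,b0}" using st by simp
    then show False using ns au bx by (elim disjE; simp)
  qed
  moreover have "{p',q'} \<noteq> {a0,b0}"
  proof
    assume "{p',q'} = {a0,b0}"
    then have "t = {a0,b0}" using st by simp
    then show False using nt au bx by (elim disjE; simp)
  qed
  ultimately have "{p,q} \<noteq> {a0,b0}" "{p',q'} \<noteq> {a0,b0}" by blast+
  from perm4[OF m dpq d this] have key:
    "(s = {a0,l} \<and> t = {b0,r}) \<or> (s = {a0,r} \<and> t = {b0,l}) \<or> (t = {a0,l} \<and> s = {b0,r}) \<or> (t = {a0,r} \<and> s = {b0,l})"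
    unfolding st .
  show ?thesis
    by (rule bexI[OF _ a0(1)], rule bexI[OF _ b0(1)], rule bexI[OF _ l(1)], rule bexI[OF _ r(1)]) (rule key)
qed

lemma signs:
 fixes Fu Fv Fx Fy Gu Gv Gx Gy :: real
 assumes z: "(Fu=0\<and>Fx=0\<and>Gu=0\<and>Gy=0) \<or> (Fu=0\<and>Fx=0\<and>Gv=0\<and>Gx=0) \<or> (Fu=0\<and>Fx=0\<and>Gv=0\<and>Gy=0) \<or>
   (Fu=0\<and>Fy=0\<and>Gu=0\<and>Gx=0) \<or> (Fu=0\<and>Fy=0\<and>Gv=0\<and>Gx=0) \<or> (Fu=0\<and>Fy=0\<and>Gv=0\<and>Gy=0) \<or>
   (Fv=0\<and>Fx=0\<and>Gu=0\<and>Gx=0) \<or> (Fv=0\<and>Fx=0\<and>Gu=0\<and>Gy=0) \<or> (Fv=0\<and>Fx=0\<and>Gv=0\<and>Gy=0) \<or>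
   (Fv=0\<and>Fy=0\<and>Gu=0\<and>Gx=0) \<or> (Fv=0\<and>Fy=0\<and>Gu=0\<and>Gy=0) \<or> (Fv=0\<and>Fy=0\<and>Gv=0\<and>Gx=0)"
 and d1: "Fu>0\<or>Fv>0\<or>Fx>0\<or>Fy>0" "Fu<0\<or>Fv<0\<or>Fx<0\<or>Fy<0"
 and d2: "Gu>0\<or>Gv>0\<or>Gx>0\<or>Gy>0" "Gu<0\<or>Gv<0\<or>Gx<0\<or>Gy<0"
 and q: "\<not>(Fu+Fv>0 \<and> Gu+Gv>0)" "\<not>(Fu+Fv<0 \<and> Gu+Gv<0)" "\<not>(Fx+Fy>0 \<and> Gx+Gy>0)" "\<not>(Fx+Fy<0 \<and> Gx+Gy<0)"
 shows "((Fu\<ge>0\<and>Fx\<le>0)\<or>(Gu\<ge>0\<and>Gx\<le>0)) \<and> ((Fu\<le>0\<and>Fx\<ge>0)\<or>(Gu\<le>0\<and>Gx\<ge>0)) \<and>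
        ((Fu\<ge>0\<and>Fy\<le>0)\<or>(Gu\<ge>0\<and>Gy\<le>0)) \<and> ((Fu\<le>0\<and>Fy\<ge>0)\<or>(Gu\<le>0\<and>Gy\<ge>0)) \<and>
        ((Fv\<ge>0\<and>Fx\<le>0)\<or>(Gv\<ge>0\<and>Gx\<le>0)) \<and> ((Fv\<le>0\<and>Fx\<ge>0)\<or>(Gv\<le>0\<and>Gx\<ge>0)) \<and>
        ((Fv\<ge>0\<and>Fy\<le>0)\<or>(Gv\<ge>0\<and>Gy\<le>0)) \<and> ((Fv\<le>0\<and>Fy\<ge>0)\<or>(Gv\<le>0\<and>Gy\<ge>0)) \<and>
        \<not>(Fu>0\<and>Gu>0) \<and> \<not>(Fu<0\<and>Gu<0) \<and> \<not>(Fv>0\<and>Gv>0) \<and> \<not>(Fv<0\<and>Gv<0) \<and>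
        \<not>(Fx>0\<and>Gx>0) \<and> \<not>(Fx<0\<and>Gx<0) \<and> \<not>(Fy>0\<and>Gy>0) \<and> \<not>(Fy<0\<and>Gy<0)"
  using z d1 d2 q by (smt (z3))
lemma hard:
  fixes F G :: "pt \<Rightarrow> real"
  assumes hF: "\<And>p. F p = s1 * cr (b-a) (p-a)" and hG: "\<And>p. G p = s2 * cr (e-c) (p-c)"
    and h1: "(F a0\<ge>0 \<and> F b0\<le>0) \<or> (G a0 \<ge>0 \<and> G b0 \<le> 0)"
    and h2: "(F a0\<le>0 \<and> F b0\<ge>0) \<or> (G a0 \<le>0 \<and> G b0 \<ge> 0)"
    and l: "F l > 0" "G l > 0" and r: "F r < 0" "G r < 0" and ne: "a0 \<noteq> b0"
  shows "convex hull {a0,l} \<inter> convex hull {b0,r} = {}" "convex hull {a0,r} \<inter> convex hull {b0,l} = {}"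
proof -
  show "convex hull {a0,l} \<inter> convex hull {b0,r} = {}"
  proof (cases "F a0\<ge>0 \<and> F b0\<le>0")
    case True then show ?thesis using l r ne by (intro sep[OF hF]) auto
  next
    case False then show ?thesis using h1 l r ne by (intro sep[OF hG]) auto
  qed
  have "convex hull {b0,l} \<inter> convex hull {a0,r} = {}"
  proof (cases "F a0\<le>0 \<and> F b0\<ge>0")
    case True then show ?thesis using l r ne by (intro sep[OF hF]) auto
  next
    case False then show ?thesis using h2 l r ne by (intro sep[OF hG]) auto
  qed
  then show "convex hull {a0,r} \<inter> convex hull {b0,l} = {}" by (simp add: Int_commute)
qed

lemma key:
  assumes gp: "gen_pos P" and g: "good2set P u v x y"
  shows "\<exists>el er. el \<in> segs P \<and> er \<in> segs P \<and> Dset u v x y \<subseteq> segs P \<and>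
    (\<forall>s\<in>segs P - (Dset u v x y \<union> {el,er}). \<forall>t\<in>segs P - (Dset u v x y \<union> {el,er}).
       s \<noteq> t \<longrightarrow> \<not> seg_disjoint s t \<longrightarrow> (\<exists>w\<in>Dset u v x y \<union> {el,er}. seg_disjoint s w \<and> seg_disjoint w t))"
proof -
  from g obtain a b c e s1 s2 el er where
    uv: "{u,v} \<in> segs P" and xy: "{x,y} \<in> segs P" and dj: "seg_disjoint {u,v} {x,y}"
    and cuv: "clean (segs P) {u,v}" and cxy: "clean (segs P) {x,y}"
    and ab: "a \<noteq> b" "c \<noteq> e" "{a,b} \<noteq> {c,e}" and da: "is_diag u v x y {a,b}" and dc: "is_diag u v x y {c,e}"
    and s1: "s1 \<in> {-1,1}" and s2: "s2 \<in> {-1,1}"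
    and q1: "quad a b c e s1 s2 \<inter> (seg_interior {u,v} \<union> seg_interior {x,y}) = {}"
    and q2: "quad a b c e (-s1) (-s2) \<inter> (seg_interior {u,v} \<union> seg_interior {x,y}) = {}"
    and el: "el \<in> segs P" "convex hull el \<subseteq> quad a b c e s1 s2" "\<forall>t\<in>segs P - Dset u v x y. \<not> crosses t el"
    and er: "er \<in> segs P" "convex hull er \<subseteq> quad a b c e (-s1) (-s2)" "\<forall>t\<in>segs P - Dset u v x y. \<not> crosses t er"
    using g unfolding good2set_def apply (elim conjE exE bexE) apply (rule that) by assumption+
  define F where "F p = s1 * cr (b-a) (p-a)" for p
  define G where "G p = s2 * cr (e-c) (p-c)" for p
  have hF: "\<And>p. F p = s1 * cr (b-a) (p-a)" and hG: "\<And>p. G p = s2 * cr (e-c) (p-c)"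
    by (simp_all add: F_def G_def)
  have uvd: "u \<noteq> v" using uv by (auto simp: segs_def doubleton_eq_iff)
  have xyd: "x \<noteq> y" using xy by (auto simp: segs_def doubleton_eq_iff)
  have "convex hull {u,v} \<inter> convex hull {x,y} = {}" using dj by (simp add: seg_disjoint_def)
  moreover have "{u,v} \<subseteq> convex hull {u,v}" "{x,y} \<subseteq> convex hull {x,y}" by (simp_all add: hull_subset)
  ultimately have uvxy: "u \<noteq> x" "u \<noteq> y" "v \<noteq> x" "v \<noteq> y" by blast+
  have F0: "F a = 0" "F b = 0" and G0: "G c = 0" "G e = 0" by (simp_all add: hF hG cr_def)
  have za: "(F u = 0 \<and> F x = 0 \<and> {a,b} = {u,x}) \<or> (F u = 0 \<and> F y = 0 \<and> {a,b} = {u,y}) \<or>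
            (F v = 0 \<and> F x = 0 \<and> {a,b} = {v,x}) \<or> (F v = 0 \<and> F y = 0 \<and> {a,b} = {v,y})"
    using da F0 unfolding is_diag_def by (auto simp: doubleton_eq_iff)
  have zc: "(G u = 0 \<and> G x = 0 \<and> {c,e} = {u,x}) \<or> (G u = 0 \<and> G y = 0 \<and> {c,e} = {u,y}) \<or>
            (G v = 0 \<and> G x = 0 \<and> {c,e} = {v,x}) \<or> (G v = 0 \<and> G y = 0 \<and> {c,e} = {v,y})"
    using dc G0 unfolding is_diag_def by (auto simp: doubleton_eq_iff)
  have z: "(F u=0\<and>F x=0\<and>G u=0\<and>G y=0) \<or> (F u=0\<and>F x=0\<and>G v=0\<and>G x=0) \<or> (F u=0\<and>F x=0\<and>G v=0\<and>G y=0) \<or>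
   (F u=0\<and>F y=0\<and>G u=0\<and>G x=0) \<or> (F u=0\<and>F y=0\<and>G v=0\<and>G x=0) \<or> (F u=0\<and>F y=0\<and>G v=0\<and>G y=0) \<or>
   (F v=0\<and>F x=0\<and>G u=0\<and>G x=0) \<or> (F v=0\<and>F x=0\<and>G u=0\<and>G y=0) \<or> (F v=0\<and>F x=0\<and>G v=0\<and>G y=0) \<or>
   (F v=0\<and>F y=0\<and>G u=0\<and>G x=0) \<or> (F v=0\<and>F y=0\<and>G u=0\<and>G y=0) \<or> (F v=0\<and>F y=0\<and>G v=0\<and>G x=0)"
    using za zc ab(3) by (elim disjE conjE; simp)
  have ms1: "-s1 \<in> {-1,1}" using s1 by auto
  have ms2: "-s2 \<in> {-1,1}" using s2 by auto
  obtain p1 where "p1 \<in> {u,v,x,y}" "s1 * cr (b-a) (p1-a) > 0" using diag_side[OF da ab(1) s1] by blast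
  then have d1a: "F u>0\<or>F v>0\<or>F x>0\<or>F y>0" by (auto simp: hF)
  obtain p2 where "p2 \<in> {u,v,x,y}" "-s1 * cr (b-a) (p2-a) > 0" using diag_side[OF da ab(1) ms1] by blast
  then have d1b: "F u<0\<or>F v<0\<or>F x<0\<or>F y<0" by (auto simp: hF)
  obtain p3 where "p3 \<in> {u,v,x,y}" "s2 * cr (e-c) (p3-c) > 0" using diag_side[OF dc ab(2) s2] by blast
  then have d2a: "G u>0\<or>G v>0\<or>G x>0\<or>G y>0" by (auto simp: hG)
  obtain p4 where "p4 \<in> {u,v,x,y}" "-s2 * cr (e-c) (p4-c) > 0" using diag_side[OF dc ab(2) ms2] by blast
  then have d2b: "G u<0\<or>G v<0\<or>G x<0\<or>G y<0" by (auto simp: hG)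
  have qa: "seg_interior {u,v} \<inter> quad a b c e s1 s2 = {}" "seg_interior {x,y} \<inter> quad a b c e s1 s2 = {}"
    using q1 by blast+
  have qb: "seg_interior {u,v} \<inter> quad a b c e (-s1) (-s2) = {}" "seg_interior {x,y} \<inter> quad a b c e (-s1) (-s2) = {}"
    using q2 by blast+
  have q: "\<not>(F u+F v>0 \<and> G u+G v>0)" "\<not>(F u+F v<0 \<and> G u+G v<0)" "\<not>(F x+F y>0 \<and> G x+G y>0)" "\<not>(F x+F y<0 \<and> G x+G y<0)"
    subgoal using quad_mid[OF qa(1) uvd] by (simp add: hF hG)
    subgoal using quad_mid[OF qb(1) uvd] unfolding hF hG mult_minus_left by linarith
    subgoal using quad_mid[OF qa(2) xyd] by (simp add: hF hG)
    subgoal using quad_mid[OF qb(2) xyd] unfolding hF hG mult_minus_left by linarith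
    done
  note SG = signs[OF z d1a d1b d2a d2b q]
  obtain l1 l2 where L: "el = {l1,l2}" "l1 \<noteq> l2" using el(1) by (auto simp: segs_def)
  obtain r1 r2 where R: "er = {r1,r2}" "r1 \<noteq> r2" using er(1) by (auto simp: segs_def)
  have lq: "F l > 0 \<and> G l > 0" if "l \<in> {l1,l2}" for l
  proof -
    have "l \<in> el" using that L(1) by simp
    then have "l \<in> convex hull el" by (rule hull_inc)
    then have "l \<in> quad a b c e s1 s2" using el(2) by (rule subsetD[rotated])
    then show ?thesis by (simp add: quad_def hF hG)
  qed
  have rq: "F r < 0 \<and> G r < 0" if "r \<in> {r1,r2}" for r
  proof -
    have "r \<in> er" using that R(1) by simp
    then have "r \<in> convex hull er" by (rule hull_inc)
    then have "r \<in> quad a b c e (-s1) (-s2)" using er(2) by (rule subsetD[rotated])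
    then have "0 < -s1 * cr (b-a) (r-a) \<and> 0 < -s2 * cr (e-c) (r-c)" by (simp only: quad_def mem_Collect_eq)
    then show ?thesis by (simp add: hF hG)
  qed
  have nqu: "\<not> (F p > 0 \<and> G p > 0) \<and> \<not> (F p < 0 \<and> G p < 0)" if "p \<in> {u,v,x,y}" for p
  proof -
    have "p = u \<or> p = v \<or> p = x \<or> p = y" using that by simp
    then show ?thesis by (elim disjE; simp only: SG simp_thms)
  qed
  have lu: "l \<notin> {u,v,x,y}" if "l \<in> {l1,l2}" for l using lq[OF that] nqu by blast
  have ru: "r \<notin> {u,v,x,y}" if "r \<in> {r1,r2}" for r using rq[OF that] nqu by blast
  have lr: "l \<noteq> r" if "l \<in> {l1,l2}" "r \<in> {r1,r2}" for l r using lq[OF that(1)] rq[OF that(2)] by auto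
  have dist: "distinct [u,v,x,y,l1,l2,r1,r2]"
    using uvd xyd uvxy L(2) R(2) lu[of l1] lu[of l2] ru[of r1] ru[of r2]
      lr[of l1 r1] lr[of l1 r2] lr[of l2 r1] lr[of l2 r2] by auto
  have hab: "((F a0\<ge>0 \<and> F b0\<le>0) \<or> (G a0 \<ge>0 \<and> G b0 \<le> 0)) \<and> ((F a0\<le>0 \<and> F b0\<ge>0) \<or> (G a0 \<le>0 \<and> G b0 \<ge> 0))"
    if "a0 \<in> {u,v}" "b0 \<in> {x,y}" for a0 b0
  proof -
    have "a0 = u \<or> a0 = v" "b0 = x \<or> b0 = y" using that by simp_all
    then show ?thesis by (elim disjE; simp only: SG simp_thms)
  qed
  show ?thesis
  proof (intro exI conjI ballI impI)
    show "el \<in> segs P" "er \<in> segs P" by fact+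
    have sub2: "A \<subseteq> P" if A: "A \<in> segs P" for A
    proof -
      obtain a' b' where "A = {a',b'}" "a' \<in> P" "b' \<in> P" using A unfolding segs_def by blast
      then show ?thesis by simp
    qed
    have "{u,v} \<subseteq> P" "{x,y} \<subseteq> P" using sub2 uv xy by blast+
    then show "Dset u v x y \<subseteq> segs P" using uvd xyd uvxy unfolding Dset_def segs_def by blast
    fix s t assume sS: "s \<in> segs P - (Dset u v x y \<union> {el,er})" and tS: "t \<in> segs P - (Dset u v x y \<union> {el,er})"
      and st: "s \<noteq> t" and nd: "\<not> seg_disjoint s t"
    show "\<exists>w\<in>Dset u v x y \<union> {el,er}. seg_disjoint s w \<and> seg_disjoint w t"
    proof (rule ccontr)
      assume nw: "\<not> ?thesis"
      have Dm: "{u,v} \<in> Dset u v x y" "{x,y} \<in> Dset u v x y" by (simp_all add: Dset_def)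
      have nc: "\<not> crosses z W" if "z \<in> {s,t}" "W \<in> {{u,v},{x,y},el,er}" for z W
      proof -
        have z: "z \<in> segs P" "z \<notin> Dset u v x y" using that(1) sS tS by auto
        have zne: "z \<noteq> {u,v}" "z \<noteq> {x,y}" using z(2) Dm by blast+
        have "W = {u,v} \<or> W = {x,y} \<or> W = el \<or> W = er" using that(2) by simp
        then show ?thesis
        proof (elim disjE)
          assume "W = {u,v}" then show ?thesis using cuv z(1) zne(1) unfolding clean_def by blast
        next
          assume "W = {x,y}" then show ?thesis using cxy z(1) zne(2) unfolding clean_def by blast
        next
          assume "W = el" then show ?thesis using el(3) z by blast
        next
          assume "W = er" then show ?thesis using er(3) z by blast
        qed
      qed
      have meet: "W \<inter> (s \<union> t) \<noteq> {}" if W: "W \<in> {{u,v},{x,y},el,er}" for W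
      proof -
        have WD: "W \<in> Dset u v x y \<union> {el,er}" using W Dm by blast
        have Wp: "W \<in> segs P" using W uv xy el(1) er(1) by blast
        have sP: "s \<in> segs P" and tP: "t \<in> segs P" using sS tS by blast+
        have "\<not> seg_disjoint s W \<or> \<not> seg_disjoint W t" using nw WD by blast
        then have "\<not> seg_disjoint s W \<or> \<not> seg_disjoint t W" using seg_disjoint_sym[of W t] by blast
        moreover have "s \<inter> W \<noteq> {}" if "\<not> seg_disjoint s W"
        proof
          assume "s \<inter> W = {}"
          then have "crosses s W" using gp_cross[OF gp sP Wp _ that] by blast
          then show False using nc[of s W] W by blast
        qed
        moreover have "t \<inter> W \<noteq> {}" if "\<not> seg_disjoint t W"
        proof
          assume "t \<inter> W = {}"
          then have "crosses t W" using gp_cross[OF gp tP Wp _ that] by blast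
          then show False using nc[of t W] W by blast
        qed
        ultimately show ?thesis by blast
      qed
      obtain p q where spq: "s = {p,q}" using sS by (auto simp: segs_def)
      obtain p' q' where tpq: "t = {p',q'}" using tS by (auto simp: segs_def)
      have s0: "s \<notin> Dset u v x y" and t0: "t \<notin> Dset u v x y" using sS tS by blast+
      have ns: "s \<notin> {{u,v},{u,x},{u,y},{v,x},{v,y},{x,y}}" using s0 unfolding Dset_def by assumption
      have nt: "t \<notin> {{u,v},{u,x},{u,y},{v,x},{v,y},{x,y}}" using t0 unfolding Dset_def by assumption
      have mA: "{u,v} \<inter> (s \<union> t) \<noteq> {}" using meet[of "{u,v}"] by simp
      have mB: "{x,y} \<inter> (s \<union> t) \<noteq> {}" using meet[of "{x,y}"] by simp
      have mL: "{l1,l2} \<inter> (s \<union> t) \<noteq> {}" using meet[of el] L(1) by simp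
      have mR: "{r1,r2} \<inter> (s \<union> t) \<noteq> {}" using meet[of er] R(1) by simp
      from comb[OF dist spq tpq mA mB mL mR ns nt]
      obtain a0 b0 l r where abl: "a0 \<in> {u,v}" "b0 \<in> {x,y}" "l \<in> {l1,l2}" "r \<in> {r1,r2}"
        and opts: "(s = {a0,l} \<and> t = {b0,r}) \<or> (s = {a0,r} \<and> t = {b0,l}) \<or> (t = {a0,l} \<and> s = {b0,r}) \<or> (t = {a0,r} \<and> s = {b0,l})"
        by blast
      have ne: "a0 \<noteq> b0" using abl(1,2) uvxy by auto
      note hh = hab[OF abl(1,2)]
      note H = hard[OF hF hG conjunct1[OF hh] conjunct2[OF hh] conjunct1[OF lq[OF abl(3)]] conjunct2[OF lq[OF abl(3)]]
                 conjunct1[OF rq[OF abl(4)]] conjunct2[OF rq[OF abl(4)]] ne]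
      have "seg_disjoint s t" using opts
      proof (elim disjE conjE)
        assume "s = {a0,l}" "t = {b0,r}" then show ?thesis using H(1) by (simp add: seg_disjoint_def)
      next
        assume "s = {a0,r}" "t = {b0,l}" then show ?thesis using H(2) by (simp add: seg_disjoint_def)
      next
        assume "t = {a0,l}" "s = {b0,r}" then show ?thesis using H(1) by (simp add: seg_disjoint_def Int_commute)
      next
        assume "t = {a0,r}" "s = {b0,l}" then show ?thesis using H(2) by (simp add: seg_disjoint_def Int_commute)
      qed
      then show False using nd by blast
    qed
  qed
qed

lemma walk_len:
  assumes "walk V E ys" "hd ys = x" "last ys = y" "x \<noteq> y"
  shows "length ys \<ge> 2" "length ys = 2 \<Longrightarrow> E x y"
proof -
  have ne: "ys \<noteq> []" using assms(1) by (simp add: walk_def)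
  show "length ys \<ge> 2"
  proof (rule ccontr)
    assume "\<not> length ys \<ge> 2"
    moreover have "length ys \<noteq> 0" using ne by simp
    ultimately have "length ys = 1" by linarith
    then obtain z where "ys = [z]" by (cases ys) auto
    then show False using assms by simp
  qed
  assume l2: "length ys = 2"
  then obtain a b where ab: "ys = [a,b]" by (cases ys; cases "tl ys") auto
  then have "E (ys ! 0) (ys ! Suc 0)" using assms(1) unfolding walk_def by auto
  then show "E x y" using ab assms by simp
qed

lemma sp2:
  assumes "x \<noteq> y" "E x y" "x \<in> V" "y \<in> V"
  shows "shortest_path V E x y [x,y]"
  unfolding shortest_path_def
proof (intro conjI allI impI)
  show "walk V E [x,y]" using assms unfolding walk_def by (auto simp: less_Suc_eq)
  fix ys assume "walk V E ys \<and> hd ys = x \<and> last ys = y"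
  then show "length [x,y] \<le> length ys" using walk_len(1)[of V E ys x y] assms(1) by auto
qed simp_all

lemma sp3:
  assumes "x \<noteq> y" "\<not> E x y" "E x w" "E w y" "x \<in> V" "y \<in> V" "w \<in> V"
  shows "shortest_path V E x y [x,w,y]"
  unfolding shortest_path_def
proof (intro conjI allI impI)
  show "walk V E [x,w,y]" using assms unfolding walk_def by (auto simp: less_Suc_eq nth_Cons')
  fix ys assume H: "walk V E ys \<and> hd ys = x \<and> last ys = y"
  then have "length ys \<ge> 2" "length ys \<noteq> 2" using walk_len[of V E ys x y] assms(1,2) by auto
  then show "length [x,w,y] \<le> length ys" by simp
qed simp_all

theorem proposition13:
  fixes P :: "(real \<times> real) set" and n :: nat
  assumes "finite P" and "card P = n" and "n \<ge> 5" and "gen_pos P"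
    and "\<exists>u v x y. good2set P u v x y"
  shows "mu (segs P) seg_disjoint \<ge> (n choose 2) - 8"
proof -
  obtain u v x y where g: "good2set P u v x y" using assms(5) by blast
  obtain el er where el: "el \<in> segs P" "er \<in> segs P" and DS: "Dset u v x y \<subseteq> segs P"
    and K: "\<forall>s\<in>segs P - (Dset u v x y \<union> {el,er}). \<forall>t\<in>segs P - (Dset u v x y \<union> {el,er}).
       s \<noteq> t \<longrightarrow> \<not> seg_disjoint s t \<longrightarrow> (\<exists>w\<in>Dset u v x y \<union> {el,er}. seg_disjoint s w \<and> seg_disjoint w t)"
    using key[OF assms(4) g] by blast
  define S where "S = Dset u v x y \<union> {el,er}"
  define U where "U = segs P - S"
  have SP: "S \<subseteq> segs P" using DS el unfolding S_def by blast
  have segs_eq: "segs P = {A. A \<subseteq> P \<and> card A = 2}"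
  proof (intro equalityI subsetI)
    fix A assume "A \<in> segs P"
    then obtain a b where "A = {a,b}" "a \<in> P" "b \<in> P" "a \<noteq> b" unfolding segs_def by blast
    then show "A \<in> {A. A \<subseteq> P \<and> card A = 2}" by simp
  next
    fix A assume A: "A \<in> {A. A \<subseteq> P \<and> card A = 2}"
    then have "A \<subseteq> P" "card A = 2" by auto
    then obtain a b where "A = {a,b}" "a \<noteq> b" using card_2_iff by metis
    then show "A \<in> segs P" unfolding segs_def using \<open>A \<subseteq> P\<close> by blast
  qed
  have fin: "finite (segs P)"
    unfolding segs_eq by (rule finite_subset[of _ "Pow P"]) (use assms(1) in auto)
  have cardsegs: "card (segs P) = n choose 2" using n_subsets[OF assms(1), of 2] segs_eq assms(2) by simp
  have cS: "card S \<le> 8"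
  proof -
    have "S = set [{u,v},{u,x},{u,y},{v,x},{v,y},{x,y},el,er]" unfolding S_def Dset_def by auto
    then show ?thesis using card_length[of "[{u,v},{u,x},{u,y},{v,x},{v,y},{x,y},el,er]"] by simp
  qed
  have finS: "finite S" using SP fin finite_subset by blast
  have cU: "card U \<ge> (n choose 2) - 8"
    using diff_card_le_card_Diff[OF finS, of "segs P"] cardsegs cS unfolding U_def by linarith
  have mv: "mv_set (segs P) seg_disjoint U"
    unfolding mv_set_def
  proof (intro conjI ballI impI)
    show "U \<subseteq> segs P" unfolding U_def by blast
    fix s t assume sU: "s \<in> U" and tU: "t \<in> U" and st: "s \<noteq> t"
    have sP: "s \<in> segs P" and tP: "t \<in> segs P" using sU tU unfolding U_def by blast+
    show "mutually_visible (segs P) seg_disjoint U s t"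
    proof (cases "seg_disjoint s t")
      case True
      then show ?thesis unfolding mutually_visible_def using sp2[of s t seg_disjoint "segs P", OF st True sP tP] by (intro exI[of _ "[s,t]"]) simp
    next
      case False
      then obtain w where w: "w \<in> S" "seg_disjoint s w" "seg_disjoint w t"
        using K sU tU st unfolding U_def S_def by blast
      have wP: "w \<in> segs P" using w(1) SP by blast
      have wU: "w \<notin> U" using w(1) unfolding U_def by blast
      show ?thesis unfolding mutually_visible_def using sp3[of s t seg_disjoint w "segs P", OF st False w(2,3) sP tP wP] wU
        by (intro exI[of _ "[s,w,t]"]) simp
    qed
  qed
  have finM: "finite {U. mv_set (segs P) seg_disjoint U}"
    by (rule finite_subset[of _ "Pow (segs P)"]) (use fin in \<open>auto simp: mv_set_def\<close>)
  have "card U \<le> mu (segs P) seg_disjoint"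
    unfolding mu_def using mv finM by (intro Max_ge) auto
  then show ?thesis using cU by linarith
qed

end
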